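(* Consider the class of three-valued logics (as defined in the context) that are paraconsistent and have properties (a) and (b). There are exactly 32 logics in this class whose logical equivalence relation $\equiv$ satisfies, for all formulas $A,B$, all of the following: (1) $A\wedge\bot \equiv \bot$; (2) $A\vee\top\equiv\top$; (3) $A\wedge\top\equiv A$; (4) $A\vee\bot\equiv A$; (5) $A\wedge A\equiv A$; (6) $A\vee A\equiv A$; (7) $A\wedge B\equiv B\wedge A$; (8) $A\vee B\equiv B\vee A$.
   Context: Formulas are built from a countably infinite set of propositional variables, the constant $\bot$, the unary connective $\neg$ and the binary connectives $\wedge,\vee,\to$; $\top$ abbreviates $\neg\bot$. Let $V=\{t,f,b\}$. A three-valued logic is specified by truth functions $\neg^M:V\to V$ and $\wedge^M,\vee^M,\to^M:V^2\to V$ that agree with the classical truth functions of negation, conjunction, disjunction and material implication on $\{t,f\}$, with $\bot$ interpreted as $f$; two logics are different iff at least one of these truth functions differs. A valuation is a map $\nu$ from formulas to $V$ with $\nu(\bot)=f$, $\nu(\neg A)=\neg^M(\nu(A))$, $\nu(A\wedge B)=\wedge^M(\nu(A),\nu(B))$, and similarly for $\vee,\to$ (values on propositional variables are arbitrary). The designated values are $t$ and $b$: $\Gamma\models A$ iff for every valuation $\nu$, either $\nu(A')=f$ for some $A'\in\Gamma$ or $\nu(A)\in\{t,b\}$. The logic is paraconsistent if there are formulas $A,B$ with $\{A,\neg A\}\not\models B$. Its logical equivalence relation is: $A\equiv B$ iff $\nu(A)=\nu(B)$ for every valuation $\nu$. Property (a): for every set of formulas $\Gamma$ and formula $A$, $\Gamma\models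 A$ implies $\Gamma\models_{\mathrm{CPL}}A$, where $\models_{\mathrm{CPL}}$ is the consequence relation of classical propositional logic (with $\bot$ false, $\to$ material implication). Property (b): for all sets $\Gamma$ and formulas $A,B,C$: (b1) $\Gamma\cup\{A\}\models B$ iff $\Gamma\models A\to B$; (b2) $\Gamma\models A\wedge B$ iff $\Gamma\models A$ and $\Gamma\models B$; (b3) $\Gamma\cup\{A\vee B\}\models C$ iff $\Gamma\cup\{A\}\models C$ and $\Gamma\cup\{B\}\models C$. *)

theory Defs
  imports Main
begin

datatype tv = T | F | B

datatype form = Var nat | Bot | Neg form | Conj form form | Disj form form | Imp form form

definition Top :: form where "Top = Neg Bot"

record logic =
  negM  :: "tv \<Rightarrow> tv"
  conjM :: "tv \<Rightarrow> tv \<Rightarrow> tv"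
  disjM :: "tv \<Rightarrow> tv \<Rightarrow> tv"
  impM  :: "tv \<Rightarrow> tv \<Rightarrow> tv"

definition tv_of_bool :: "bool \<Rightarrow> tv" where
  "tv_of_bool p = (if p then T else F)"

definition classical_on_tf :: "logic \<Rightarrow> bool" where
  "classical_on_tf L \<longleftrightarrow>
     (\<forall>p. negM L (tv_of_bool p) = tv_of_bool (\<not> p)) \<and>
     (\<forall>p q. conjM L (tv_of_bool p) (tv_of_bool q) = tv_of_bool (p \<and> q)) \<and>
     (\<forall>p q. disjM L (tv_of_bool p) (tv_of_bool q) = tv_of_bool (p \<or> q)) \<and>
     (\<forall>p q. impM L (tv_of_bool p) (tv_of_bool q) = tv_of_bool (p \<longrightarrow> q))"

fun eval :: "logic \<Rightarrow> (nat \<Rightarrow> tv) \<Rightarrow> form \<Rightarrow> tv" where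
  "eval L v (Var n) = v n"
| "eval L v Bot = F"
| "eval L v (Neg A) = negM L (eval L v A)"
| "eval L v (Conj A C) = conjM L (eval L v A) (eval L v C)"
| "eval L v (Disj A C) = disjM L (eval L v A) (eval L v C)"
| "eval L v (Imp A C) = impM L (eval L v A) (eval L v C)"

definition designated :: "tv \<Rightarrow> bool" where
  "designated x \<longleftrightarrow> x = T \<or> x = B"

definition conseq :: "logic \<Rightarrow> form set \<Rightarrow> form \<Rightarrow> bool" where
  "conseq L \<Gamma> A \<longleftrightarrow>
     (\<forall>v. (\<exists>A'\<in>\<Gamma>. eval L v A' = F) \<or> designated (eval L v A))"

fun ceval :: "(nat \<Rightarrow> bool) \<Rightarrow> form \<Rightarrow> bool" where
  "ceval v (Var n) = v n"
| "ceval v Bot = False"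
| "ceval v (Neg A) = (\<not> ceval v A)"
| "ceval v (Conj A C) = (ceval v A \<and> ceval v C)"
| "ceval v (Disj A C) = (ceval v A \<or> ceval v C)"
| "ceval v (Imp A C) = (ceval v A \<longrightarrow> ceval v C)"

definition cpl_conseq :: "form set \<Rightarrow> form \<Rightarrow> bool" where
  "cpl_conseq \<Gamma> A \<longleftrightarrow> (\<forall>v. (\<forall>A'\<in>\<Gamma>. ceval v A') \<longrightarrow> ceval v A)"

definition paraconsistent :: "logic \<Rightarrow> bool" where
  "paraconsistent L \<longleftrightarrow> (\<exists>A C. \<not> conseq L {A, Neg A} C)"

definition prop_a :: "logic \<Rightarrow> bool" where
  "prop_a L \<longleftrightarrow> (\<forall>\<Gamma> A. conseq L \<Gamma> A \<longrightarrow> cpl_conseq \<Gamma> A)"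

definition prop_b :: "logic \<Rightarrow> bool" where
  "prop_b L \<longleftrightarrow> (\<forall>\<Gamma> A C D.
     (conseq L (\<Gamma> \<union> {A}) C \<longleftrightarrow> conseq L \<Gamma> (Imp A C)) \<and>
     (conseq L \<Gamma> (Conj A C) \<longleftrightarrow> conseq L \<Gamma> A \<and> conseq L \<Gamma> C) \<and>
     (conseq L (\<Gamma> \<union> {Disj A C}) D \<longleftrightarrow>
        conseq L (\<Gamma> \<union> {A}) D \<and> conseq L (\<Gamma> \<union> {C}) D))"

definition lequiv :: "logic \<Rightarrow> form \<Rightarrow> form \<Rightarrow> bool" where
  "lequiv L A C \<longleftrightarrow> (\<forall>v. eval L v A = eval L v C)"

definition lattice_laws :: "logic \<Rightarrow> bool" where
  "lattice_laws L \<longleftrightarrow> (\<forall>A C.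
     lequiv L (Conj A Bot) Bot \<and>
     lequiv L (Disj A Top) Top \<and>
     lequiv L (Conj A Top) A \<and>
     lequiv L (Disj A Bot) A \<and>
     lequiv L (Conj A A) A \<and>
     lequiv L (Disj A A) A \<and>
     lequiv L (Conj A C) (Conj C A) \<and>
     lequiv L (Disj A C) (Disj C A))"

end

theory Submission
  imports Defs
begin

definition c0 :: "tv \<Rightarrow> tv \<Rightarrow> tv" where
  "c0 x y = (if x = F \<or> y = F then F else if x = T \<and> y = T then T else B)"
definition d0 :: "tv \<Rightarrow> tv \<Rightarrow> tv" where
  "d0 x y = (if x = T \<or> y = T then T else if x = F \<and> y = F then F else B)"
definition n0 :: "tv \<Rightarrow> tv \<Rightarrow> tv" where
  "n0 n x = (case x of T \<Rightarrow> F | F \<Rightarrow> T | B \<Rightarrow> n)"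
definition i0 :: "tv \<Rightarrow> tv \<Rightarrow> tv \<Rightarrow> tv \<Rightarrow> tv \<Rightarrow> tv \<Rightarrow> tv" where
  "i0 a b c d x y = (case x of
      T \<Rightarrow> (case y of T \<Rightarrow> T | F \<Rightarrow> F | B \<Rightarrow> a)
    | F \<Rightarrow> (case y of T \<Rightarrow> T | F \<Rightarrow> T | B \<Rightarrow> b)
    | B \<Rightarrow> (case y of T \<Rightarrow> c | F \<Rightarrow> F | B \<Rightarrow> d))"

definition mk :: "tv \<Rightarrow> tv \<Rightarrow> tv \<Rightarrow> tv \<Rightarrow> tv \<Rightarrow> logic" where
  "mk n a b c d = \<lparr>negM = n0 n, conjM = c0, disjM = d0, impM = i0 a b c d\<rparr>"

lemma rec_eq: assumes "negM L = f" "impM L = i" "conjM L = g" "disjM L = h"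
  shows "L = \<lparr>negM = f, conjM = g, disjM = h, impM = i\<rparr>"
  using assms by (cases L) simp

lemma tv_cases3: "(x::tv) = T \<or> x = F \<or> x = B" by (cases x) auto

lemma desig_iff: "designated x \<longleftrightarrow> x \<noteq> F"
  by (cases x) (auto simp: designated_def)

lemma conseq_alt: "conseq L \<Gamma> A \<longleftrightarrow> (\<forall>v. (\<forall>A'\<in>\<Gamma>. eval L v A' \<noteq> F) \<longrightarrow> eval L v A \<noteq> F)"
  unfolding conseq_def desig_iff by blast

lemma tvb_F: "tv_of_bool p = F \<longleftrightarrow> \<not> p" by (simp add: tv_of_bool_def)
lemma tvb_d: "designated (tv_of_bool p) \<longleftrightarrow> p" by (simp add: tv_of_bool_def designated_def)

lemma eval_classical:
  assumes "classical_on_tf L"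
  shows "eval L (tv_of_bool \<circ> w) X = tv_of_bool (ceval w X)"
  using assms by (induction X) (auto simp: classical_on_tf_def tv_of_bool_def)

lemma prop_a_auto: "classical_on_tf L \<Longrightarrow> prop_a L"
  unfolding prop_a_def cpl_conseq_def
proof (intro allI impI)
  fix \<Gamma> A w
  assume c: "classical_on_tf L" and h: "conseq L \<Gamma> A" and g: "\<forall>A'\<in>\<Gamma>. ceval w A'"
  from h have "(\<exists>A'\<in>\<Gamma>. eval L (tv_of_bool \<circ> w) A' = F) \<or> designated (eval L (tv_of_bool \<circ> w) A)"
    unfolding conseq_def by blast
  then show "ceval w A" using g by (auto simp: eval_classical[OF c] tvb_F tvb_d)
qed

lemma prop_b_suff:
  assumes i: "\<And>x y. impM L x y \<noteq> F \<longleftrightarrow> (x = F \<or> y \<noteq> F)"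
    and c: "\<And>x y. conjM L x y \<noteq> F \<longleftrightarrow> (x \<noteq> F \<and> y \<noteq> F)"
    and d: "\<And>x y. disjM L x y \<noteq> F \<longleftrightarrow> (x \<noteq> F \<or> y \<noteq> F)"
  shows "prop_b L"
  unfolding prop_b_def conseq_alt using i c d by auto

lemma mk_good:
  assumes "n \<in> {T,B}" "a \<in> {T,B}" "b \<in> {T,B}" "c \<in> {T,B}" "d \<in> {T,B}"
  shows "classical_on_tf (mk n a b c d) \<and> paraconsistent (mk n a b c d) \<and> prop_a (mk n a b c d)
     \<and> prop_b (mk n a b c d) \<and> lattice_laws (mk n a b c d)"
proof -
  have cl: "classical_on_tf (mk n a b c d)"
    unfolding classical_on_tf_def mk_def tv_of_bool_def by (auto simp: n0_def c0_def d0_def i0_def)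
  moreover have "paraconsistent (mk n a b c d)"
    unfolding paraconsistent_def conseq_def
    apply (rule exI[of _ "Var 0"], rule exI[of _ Bot])
    using assms by (auto simp: mk_def n0_def designated_def intro!: exI[of _ "\<lambda>_. B"])
  moreover have "prop_a (mk n a b c d)" using cl by (rule prop_a_auto)
  moreover have "prop_b (mk n a b c d)"
    apply (rule prop_b_suff)
    using assms by (auto simp: mk_def c0_def d0_def i0_def split: tv.splits)
  moreover have "lattice_laws (mk n a b c d)"
  proof -
    have pw: "\<And>x y. c0 x F = F \<and> d0 x T = T \<and> c0 x T = x \<and> d0 x F = x \<and> c0 F x = F \<and> d0 T x = T \<and> c0 T x = x \<and> d0 F x = x \<and> c0 x x = x \<and> d0 x x = x
        \<and> c0 x y = c0 y x \<and> d0 x y = d0 y x"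
      subgoal for x y using tv_cases3[of x] tv_cases3[of y] by (auto simp: c0_def d0_def) done
    show ?thesis unfolding lattice_laws_def lequiv_def Top_def
      by (simp add: mk_def pw n0_def)
  qed
  ultimately show ?thesis by blast
qed

lemma good_mk:
  assumes cl: "classical_on_tf L" and pc: "paraconsistent L" and pb: "prop_b L" and ll: "lattice_laws L"
  shows "\<exists>n a b c d. n \<in> {T,B} \<and> a \<in> {T,B} \<and> b \<in> {T,B} \<and> c \<in> {T,B} \<and> d \<in> {T,B}
           \<and> L = mk n a b c d"
proof -
  have C1: "\<And>p. negM L (tv_of_bool p) = tv_of_bool (\<not> p)"
   and C2: "\<And>p q. conjM L (tv_of_bool p) (tv_of_bool q) = tv_of_bool (p \<and> q)"
   and C3: "\<And>p q. disjM L (tv_of_bool p) (tv_of_bool q) = tv_of_bool (p \<or> q)"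
   and C4: "\<And>p q. impM L (tv_of_bool p) (tv_of_bool q) = tv_of_bool (p \<longrightarrow> q)"
    using cl unfolding classical_on_tf_def by blast+
  have nT: "negM L T = F" using C1[of True] by (simp add: tv_of_bool_def)
  have nF: "negM L F = T" using C1[of False] by (simp add: tv_of_bool_def)
  have cTT: "conjM L T T = T" using C2[of True True] by (simp add: tv_of_bool_def)
  have cTF: "conjM L T F = F" using C2[of True False] by (simp add: tv_of_bool_def)
  have cFT: "conjM L F T = F" using C2[of False True] by (simp add: tv_of_bool_def)
  have cFF: "conjM L F F = F" using C2[of False False] by (simp add: tv_of_bool_def)
  have dTT: "disjM L T T = T" using C3[of True True] by (simp add: tv_of_bool_def)
  have dTF: "disjM L T F = T" using C3[of True False] by (simp add: tv_of_bool_def)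
  have dFT: "disjM L F T = T" using C3[of False True] by (simp add: tv_of_bool_def)
  have dFF: "disjM L F F = F" using C3[of False False] by (simp add: tv_of_bool_def)
  have iTT: "impM L T T = T" using C4[of True True] by (simp add: tv_of_bool_def)
  have iTF: "impM L T F = F" using C4[of True False] by (simp add: tv_of_bool_def)
  have iFT: "impM L F T = T" using C4[of False True] by (simp add: tv_of_bool_def)
  have iFF: "impM L F F = T" using C4[of False False] by (simp add: tv_of_bool_def)
  have nB: "negM L B \<noteq> F"
  proof
    assume nBF: "negM L B = F"
    from pc obtain A C where "\<not> conseq L {A, Neg A} C" unfolding paraconsistent_def by blast
    then obtain v where "eval L v A \<noteq> F" "negM L (eval L v A) \<noteq> F" unfolding conseq_alt by auto
    then show False using nBF nT tv_cases3[of "eval L v A"] by auto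
  qed
  have lwB: "conjM L x F = F \<and> disjM L x T = T \<and> conjM L x T = x \<and> disjM L x F = x
     \<and> conjM L x x = x \<and> disjM L x x = x \<and> conjM L x y = conjM L y x \<and> disjM L x y = disjM L y x"
    for x y
  proof -
    define v where "v = (\<lambda>n::nat. if n = 0 then x else y)"
    have H: "lequiv L (Conj (Var 0) Bot) Bot \<and>
     lequiv L (Disj (Var 0) Top) Top \<and>
     lequiv L (Conj (Var 0) Top) (Var 0) \<and>
     lequiv L (Disj (Var 0) Bot) (Var 0) \<and>
     lequiv L (Conj (Var 0) (Var 0)) (Var 0) \<and>
     lequiv L (Disj (Var 0) (Var 0)) (Var 0) \<and>
     lequiv L (Conj (Var 0) (Var 1)) (Conj (Var 1) (Var 0)) \<and>
     lequiv L (Disj (Var 0) (Var 1)) (Disj (Var 1) (Var 0))"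
      using ll unfolding lattice_laws_def by blast
    have H2: "\<And>P Q. lequiv L P Q \<Longrightarrow> eval L v P = eval L v Q" unfolding lequiv_def by blast
    from H show ?thesis
      by (auto dest!: H2 simp: v_def Top_def nF)
  qed
  have cc: "conjM L = c0"
  proof (intro ext)
    fix x y show "conjM L x y = c0 x y"
      using lwB[of x y] lwB[of y x] tv_cases3[of x] tv_cases3[of y] cTT cTF cFT cFF
      by (auto simp: c0_def)
  qed
  have dd: "disjM L = d0"
  proof (intro ext)
    fix x y show "disjM L x y = d0 x y"
      using lwB[of x y] lwB[of y x] tv_cases3[of x] tv_cases3[of y] dTT dTF dFT dFF
      by (auto simp: d0_def)
  qed
  have b1: "\<And>\<Gamma> A C. conseq L (\<Gamma> \<union> {A}) C \<longleftrightarrow> conseq L \<Gamma> (Imp A C)"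
    using pb unfolding prop_b_def by blast
  have iBF: "impM L B F = F"
  proof -
    have "conseq L {Imp (Var 0) Bot} (Imp (Var 0) Bot)" unfolding conseq_alt by auto
    then have "conseq L ({Imp (Var 0) Bot} \<union> {Var 0}) Bot" using b1 by blast
    then show ?thesis
      apply (simp add: conseq_alt)
      apply (drule spec[where x="\<lambda>_. B"])
      by simp
  qed
  have iy: "\<And>x y. y \<noteq> F \<Longrightarrow> impM L x y \<noteq> F"
  proof -
    fix x y assume y: "y \<noteq> F"
    have "conseq L ({Var 1} \<union> {Var 0}) (Var 1)" unfolding conseq_alt by auto
    then have "conseq L {Var 1} (Imp (Var 0) (Var 1))" using b1 by blast
    then show "impM L x y \<noteq> F" using y
      apply (simp add: conseq_alt)
      apply (drule spec[where x="\<lambda>n. if n = 0 then x else y"])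
      by simp
  qed
  have iF: "\<And>y. impM L F y \<noteq> F"
  proof -
    fix y
    have "conseq L ({} \<union> {Bot}) (Var 1)" unfolding conseq_alt by auto
    then have "conseq L {} (Imp Bot (Var 1))" using b1 by blast
    then show "impM L F y \<noteq> F"
      apply (simp add: conseq_alt)
      apply (drule spec[where x="\<lambda>n. y"])
      by simp
  qed
  have ii: "impM L = i0 (impM L T B) (impM L F B) (impM L B T) (impM L B B)"
  proof (intro ext)
    fix x y show "impM L x y = i0 (impM L T B) (impM L F B) (impM L B T) (impM L B B) x y"
      using tv_cases3[of x] tv_cases3[of y] iTT iTF iFT iFF iBF
      by (auto simp: i0_def)
  qed
  have nn: "negM L = n0 (negM L B)"
  proof (intro ext)
    fix x show "negM L x = n0 (negM L B) x" using tv_cases3[of x] nT nF by (auto simp: n0_def)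
  qed
  have TB: "\<And>z. z \<noteq> F \<Longrightarrow> z \<in> {T,B}" using tv_cases3 by blast
  obtain n a b c d where nd: "n = negM L B" "a = impM L T B" "b = impM L F B" "c = impM L B T" "d = impM L B B"
    by blast
  have nn': "negM L = n0 n" and ii': "impM L = i0 a b c d" using nn ii nd by simp_all
  have "L = mk n a b c d"
    unfolding mk_def using nn' ii' cc dd by (rule rec_eq)
  moreover have "n \<in> {T,B} \<and> a \<in> {T,B} \<and> b \<in> {T,B} \<and> c \<in> {T,B} \<and> d \<in> {T,B}"
    using TB nB iy iF nd by simp
  ultimately show ?thesis by blast
qed

lemma mk_inj: "mk n a b c d = mk n' a' b' c' d' \<Longrightarrow> n = n' \<and> a = a' \<and> b = b' \<and> c = c' \<and> d = d'"
proof -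
  assume h: "mk n a b c d = mk n' a' b' c' d'"
  have "negM (mk n a b c d) B = negM (mk n' a' b' c' d') B"
    "impM (mk n a b c d) T B = impM (mk n' a' b' c' d') T B"
    "impM (mk n a b c d) F B = impM (mk n' a' b' c' d') F B"
    "impM (mk n a b c d) B T = impM (mk n' a' b' c' d') B T"
    "impM (mk n a b c d) B B = impM (mk n' a' b' c' d') B B"
    using h by simp_all
  then show ?thesis by (simp add: mk_def n0_def i0_def)
qed

lemma setS_sub1: "(\<lambda>(n,a,b,c,d). mk n a b c d) ` ({T,B} \<times> {T,B} \<times> {T,B} \<times> {T,B} \<times> {T,B})
  \<subseteq> {L :: logic. classical_on_tf L \<and> paraconsistent L \<and> prop_a L \<and> prop_b L \<and> lattice_laws L}"
proof (rule subsetI)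
  fix x assume "x \<in> (\<lambda>(n,a,b,c,d). mk n a b c d) ` ({T,B} \<times> {T,B} \<times> {T,B} \<times> {T,B} \<times> {T,B})"
  then obtain p where p: "p \<in> {T,B} \<times> {T,B} \<times> {T,B} \<times> {T,B} \<times> {T,B}"
    and x: "x = (\<lambda>(n,a,b,c,d). mk n a b c d) p" by (rule imageE)
  obtain n a b c d where pe: "p = (n,a,b,c,d)" by (cases p)
  have pp: "(n,a,b,c,d) \<in> {T,B} \<times> {T,B} \<times> {T,B} \<times> {T,B} \<times> {T,B}" using p unfolding pe .
  have m1: "n \<in> {T,B}" by (rule SigmaD1[OF pp])
  have m2: "a \<in> {T,B}" by (rule SigmaD1[OF SigmaD2[OF pp]])
  have m3: "b \<in> {T,B}" by (rule SigmaD1[OF SigmaD2[OF SigmaD2[OF pp]]])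
  have m4: "c \<in> {T,B}" by (rule SigmaD1[OF SigmaD2[OF SigmaD2[OF SigmaD2[OF pp]]]])
  have m5: "d \<in> {T,B}" by (rule SigmaD2[OF SigmaD2[OF SigmaD2[OF SigmaD2[OF pp]]]])
  note m = m1 m2 m3 m4 m5
  have "x = mk n a b c d" using x pe by simp
  then show "x \<in> {L :: logic. classical_on_tf L \<and> paraconsistent L \<and> prop_a L \<and> prop_b L \<and> lattice_laws L}"
    using mk_good[OF m] by simp
qed

lemma setS_sub2: "{L :: logic. classical_on_tf L \<and> paraconsistent L \<and> prop_a L \<and> prop_b L \<and> lattice_laws L}
  \<subseteq> (\<lambda>(n,a,b,c,d). mk n a b c d) ` ({T,B} \<times> {T,B} \<times> {T,B} \<times> {T,B} \<times> {T,B})"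
proof (rule subsetI)
  fix L assume "L \<in> {L :: logic. classical_on_tf L \<and> paraconsistent L \<and> prop_a L \<and> prop_b L \<and> lattice_laws L}"
  then have h: "classical_on_tf L" "paraconsistent L" "prop_b L" "lattice_laws L" by simp_all
  from good_mk[OF h] obtain n a b c d where m: "n \<in> {T,B}" "a \<in> {T,B}" "b \<in> {T,B}" "c \<in> {T,B}" "d \<in> {T,B}"
     and L: "L = mk n a b c d"
    by (elim exE conjE)
  have "(n,a,b,c,d) \<in> {T,B} \<times> {T,B} \<times> {T,B} \<times> {T,B} \<times> {T,B}" by (intro SigmaI m)
  moreover have "L = (\<lambda>(n,a,b,c,d). mk n a b c d) (n,a,b,c,d)" using L by simp
  ultimately show "L \<in> (\<lambda>(n,a,b,c,d). mk n a b c d) ` ({T,B} \<times> {T,B} \<times> {T,B} \<times> {T,B} \<times> {T,B})"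
    by (rule rev_image_eqI)
qed

lemma inj_f: "inj_on (\<lambda>(n,a,b,c,d). mk n a b c d) ({T,B} \<times> {T,B} \<times> {T,B} \<times> {T,B} \<times> {T,B})"
proof (rule inj_onI)
  fix x y assume "(\<lambda>(n,a,b,c,d). mk n a b c d) x = (\<lambda>(n,a,b,c,d). mk n a b c d) y"
  moreover obtain n a b c d where "x = (n,a,b,c,d)" by (cases x)
  moreover obtain n' a' b' c' d' where "y = (n',a',b',c',d')" by (cases y)
  ultimately show "x = y" using mk_inj[of n a b c d n' a' b' c' d'] by simp
qed

theorem corollary2:
  shows "card {L :: logic. classical_on_tf L \<and> paraconsistent L \<and> prop_a L \<and> prop_b L
                 \<and> lattice_laws L} = 32"
proof -
  have eq: "{L :: logic. classical_on_tf L \<and> paraconsistent L \<and> prop_a L \<and> prop_b L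
                 \<and> lattice_laws L} = (\<lambda>(n,a,b,c,d). mk n a b c d) ` ({T,B} \<times> {T,B} \<times> {T,B} \<times> {T,B} \<times> {T,B})"
    using setS_sub1 setS_sub2 by (rule equalityI[rotated])
  have c: "card ({T,B} \<times> {T,B} \<times> {T,B} \<times> {T,B} \<times> {T,B}) = 32" by (simp add: card_cartesian_product)
  show ?thesis unfolding eq card_image[OF inj_f] c ..
qed

end
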